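(* Let $G=(V,E)$ be a simple directed graph and $f\ge 0$ an integer, and suppose $G$ satisfies the 3-reach condition. Then for any three sets $F_v,F_u,F_w$ with $F_v\subset V$, $F_u,F_w\subseteq V\setminus F_v$ and $|F_v|,|F_u|,|F_w|\le f$, we have $S_{F_v,F_u}\cap S_{F_v,F_w}\neq\emptyset$.
   Context: $\overline{X}=V\setminus X$; $G_Y$ is the subgraph induced by $Y\subseteq V$. For node $v$ and $F\subseteq V\setminus\{v\}$, $reach_v(F)=\{u\in\overline{F}: u\text{ has a directed path to }v\text{ in }G_{\overline{F}}\}$. 3-reach condition: for any $u,v\in V$ and any $F,F_u,F_v\subseteq V$ with $|F|,|F_u|,|F_v|\le f$, $u\notin F\cup F_u$, $v\notin F\cup F_v$, $reach_v(F\cup F_v)\cap reach_u(F\cup F_u)\neq\emptyset$. Reduced graph: for $F_1,F_2\subseteq V$ with $|F_1|,|F_2|\le f$, $G_{F_1,F_2}=(V,E_{F_1,F_2})$ where $E_{F_1,F_2}=E\setminus\{(u,w): u\in F_1\cup F_2,\ w\in V, w\neq u\}$ (all outgoing edges of nodes in $F_1\cup F_2$ removed, vertex set unchanged). Source component: $S_{F_1,F_2}$ is the set of nodes of $G_{F_1,F_2}$ that have directed paths in $G_{F_1,F_2}$ to all nodes of $V$. *)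

theory Defs
  imports Main
begin

definition simple_digraph :: "'a set \<Rightarrow> ('a \<times> 'a) set \<Rightarrow> bool" where
  "simple_digraph V E \<longleftrightarrow> finite V \<and> E \<subseteq> V \<times> V \<and> (\<forall>x. (x, x) \<notin> E)"

definition induced_edges :: "('a \<times> 'a) set \<Rightarrow> 'a set \<Rightarrow> ('a \<times> 'a) set" where
  "induced_edges E Y = E \<inter> (Y \<times> Y)"

definition reach :: "'a set \<Rightarrow> ('a \<times> 'a) set \<Rightarrow> 'a \<Rightarrow> 'a set \<Rightarrow> 'a set" where
  "reach V E v F = {u \<in> V - F. (u, v) \<in> (induced_edges E (V - F))\<^sup>*}"

definition three_reach :: "'a set \<Rightarrow> ('a \<times> 'a) set \<Rightarrow> nat \<Rightarrow> bool" where
  "three_reach V E f \<longleftrightarrow>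
     (\<forall>u\<in>V. \<forall>v\<in>V. \<forall>F Fu Fv.
        F \<subseteq> V \<and> Fu \<subseteq> V \<and> Fv \<subseteq> V \<and> card F \<le> f \<and> card Fu \<le> f \<and> card Fv \<le> f \<and>
        u \<notin> F \<union> Fu \<and> v \<notin> F \<union> Fv \<longrightarrow>
        reach V E v (F \<union> Fv) \<inter> reach V E u (F \<union> Fu) \<noteq> {})"

definition reduced_edges :: "('a \<times> 'a) set \<Rightarrow> 'a set \<Rightarrow> 'a set \<Rightarrow> ('a \<times> 'a) set" where
  "reduced_edges E F1 F2 = E - {(u, w). u \<in> F1 \<union> F2 \<and> w \<noteq> u}"

definition source_component :: "'a set \<Rightarrow> ('a \<times> 'a) set \<Rightarrow> 'a set \<Rightarrow> 'a set \<Rightarrow> 'a set" where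
  "source_component V E F1 F2 = {s \<in> V. \<forall>x\<in>V. (s, x) \<in> (reduced_edges E F1 F2)\<^sup>*}"

end

theory Submission
  imports Defs
begin

lemma reach_single:
  assumes "simple_digraph V E" "a \<in> V" "a \<notin> Z" "\<forall>y. (y, a) \<in> E \<longrightarrow> y \<in> Z \<or> y = a"
  shows "reach V E a Z = {a}"
proof -
  have "u = a" if "(u, a) \<in> (induced_edges E (V - Z))\<^sup>*" for u
    using that
  proof (cases rule: rtranclE)
    case (step y)
    then show ?thesis using assms(1,4) unfolding induced_edges_def simple_digraph_def by blast
  qed simp
  then show ?thesis using assms unfolding reach_def by auto
qed

lemma contra:
  assumes s: "simple_digraph V E" and t: "three_reach V E f"
    and aV: "a \<in> V" and vV: "v \<in> V"
    and sub: "F \<subseteq> V" "Fu \<subseteq> V" "Fw \<subseteq> V"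
    and c: "card F \<le> f" "card Fu \<le> f" "card Fw \<le> f"
    and a1: "a \<notin> F \<union> Fu" and nb: "\<forall>y. (y, a) \<in> E \<longrightarrow> y \<in> F \<union> Fu \<or> y = a"
    and v1: "v \<notin> F \<union> Fw" and a2: "a \<in> F \<union> Fw"
  shows False
proof -
  have "reach V E v (F \<union> Fw) \<inter> reach V E a (F \<union> Fu) \<noteq> {}"
    using t aV vV sub c a1 v1 unfolding three_reach_def by blast
  moreover have "reach V E a (F \<union> Fu) = {a}" using reach_single[OF s aV a1 nb] .
  moreover have "a \<notin> reach V E v (F \<union> Fw)" using a2 unfolding reach_def by auto
  ultimately show False by auto
qed

lemma isolated:
  assumes s: "simple_digraph V E" and t: "three_reach V E f"
    and Fv: "Fv \<subset> V" and X: "X \<subseteq> V - Fv"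
    and c: "card Fv \<le> f" "card X \<le> f"
    and aV: "a \<in> V" and aN: "a \<in> Fv \<union> X"
    and nb: "\<forall>y. (y, a) \<in> E \<longrightarrow> y \<in> Fv \<union> X"
    and w: "w \<in> V" "w \<noteq> a"
  shows False
proof -
  have fin: "finite V" using s unfolding simple_digraph_def by auto
  have finFv: "finite Fv" using Fv fin finite_subset by blast
  have finX: "finite X" using X fin finite_subset by blast
  have cm: "card S \<le> f" if "S \<subseteq> T" "finite T" "card T \<le> f" for S T
    using card_mono[OF that(2,1)] that(3) by linarith
  show False
  proof (cases "a \<in> Fv")
    case True
    have "card Fv \<ge> 1" using True finFv
      by (metis One_nat_def Suc_leI card_gt_0_iff empty_iff)
    hence c1: "card {a} \<le> f" using c by simp
    obtain v where v: "v \<in> V" "v \<notin> Fv" using Fv by blast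
    show False
      apply (rule contra[OF s t aV v(1), of "Fv - {a}" X "{a}"])
      using Fv X c c1 True v nb cm[of "Fv - {a}" Fv] finFv aV by auto
  next
    case False
    hence aX: "a \<in> X" using aN by auto
    have "card X \<ge> 1" using aX finX
      by (metis One_nat_def Suc_leI card_gt_0_iff empty_iff)
    hence c1: "card {a} \<le> f" using c by simp
    show False
    proof (cases "\<exists>v\<in>V. v \<notin> Fv \<union> X")
      case True
      then obtain v where v: "v \<in> V" "v \<notin> Fv \<union> X" by blast
      show False
        apply (rule contra[OF s t aV v(1), of Fv "X - {a}" X])
        using Fv X c aX v nb cm[of "X - {a}" X] finX by auto
    next
      case nv: False
      show False
      proof (cases "Fv = {}")
        case False
        then obtain v where v: "v \<in> Fv" by blast
        show False
          apply (rule contra[OF s t aV, of v "X - {a}" Fv "{a}"])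
          using Fv X c c1 aX v nb cm[of "X - {a}" X] finX by auto
      next
        case True
        have c2: "card {w} \<le> f" using c1 by simp
        have wX: "w \<in> X" using nv w True by auto
        show False
          apply (rule contra[OF s t aV w(1), of "X - {a, w}" "{w}" "{a}"])
          using Fv X c c1 c2 aX wX w nb cm[of "X - {a, w}" X] finX True by auto
      qed
    qed
  qed
qed

lemma path_mono:
  assumes "Fv \<union> X \<subseteq> Z" "(z, a) \<in> (induced_edges E (V - Z))\<^sup>*"
  shows "(z, a) \<in> (reduced_edges E Fv X)\<^sup>*"
proof -
  have "induced_edges E (V - Z) \<subseteq> reduced_edges E Fv X"
    using assms(1) unfolding induced_edges_def reduced_edges_def by auto
  then show ?thesis using assms(2) rtrancl_mono by blast
qed

lemma good_node:
  assumes s: "simple_digraph V E" and t: "three_reach V E f"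
    and Fv: "Fv \<subset> V" and X: "X \<subseteq> V - Fv"
    and c: "card Fv \<le> f" "card X \<le> f"
    and aV: "a \<in> V" and w: "w \<in> V" "w \<noteq> a"
  shows "\<exists>a'. a' \<in> V \<and> a' \<notin> Fv \<union> X \<and> (a', a) \<in> (reduced_edges E Fv X)\<^sup>*"
proof (cases "a \<in> Fv \<union> X")
  case False
  then show ?thesis using aV by blast
next
  case True
  show ?thesis
  proof (cases "\<forall>y. (y, a) \<in> E \<longrightarrow> y \<in> Fv \<union> X")
    case True
    then show ?thesis using isolated[OF s t Fv X c aV _ True w] \<open>a \<in> Fv \<union> X\<close> by blast
  next
    case False
    then obtain y where y: "(y, a) \<in> E" "y \<notin> Fv \<union> X" by blast
    have "y \<in> V" using y s unfolding simple_digraph_def by auto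
    moreover have "(y, a) \<in> reduced_edges E Fv X" using y unfolding reduced_edges_def by auto
    ultimately show ?thesis using y by blast
  qed
qed

lemma common:
  assumes s: "simple_digraph V E" and t: "three_reach V E f"
    and Fv: "Fv \<subset> V" and X: "X \<subseteq> V - Fv" and Y: "Y \<subseteq> V - Fv"
    and c: "card Fv \<le> f" "card X \<le> f" "card Y \<le> f"
    and aV: "a \<in> V" and bV: "b \<in> V"
  shows "\<exists>z. (z, a) \<in> (reduced_edges E Fv X)\<^sup>* \<and> (z, b) \<in> (reduced_edges E Fv Y)\<^sup>*"
proof (cases "V = {a}")
  case True
  then show ?thesis using bV by auto
next
  case False
  then obtain w where w: "w \<in> V" "w \<noteq> a" using aV by blast
  obtain w' where w': "w' \<in> V" "w' \<noteq> b" using False aV bV by blast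
  obtain a' where a': "a' \<in> V" "a' \<notin> Fv \<union> X" "(a', a) \<in> (reduced_edges E Fv X)\<^sup>*"
    using good_node[OF s t Fv X c(1,2) aV w] by blast
  obtain b' where b': "b' \<in> V" "b' \<notin> Fv \<union> Y" "(b', b) \<in> (reduced_edges E Fv Y)\<^sup>*"
    using good_node[OF s t Fv Y c(1,3) bV w'] by blast
  have "reach V E b' (Fv \<union> Y) \<inter> reach V E a' (Fv \<union> X) \<noteq> {}"
    using t a' b' Fv X Y c unfolding three_reach_def by blast
  then obtain z where z: "z \<in> reach V E b' (Fv \<union> Y)" "z \<in> reach V E a' (Fv \<union> X)" by blast
  have "(z, a') \<in> (reduced_edges E Fv X)\<^sup>*"
    using z(2) path_mono[of Fv X "Fv \<union> X" z a' E V] unfolding reach_def by auto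
  moreover have "(z, b') \<in> (reduced_edges E Fv Y)\<^sup>*"
    using z(1) path_mono[of Fv Y "Fv \<union> Y" z b' E V] unfolding reach_def by auto
  ultimately show ?thesis using a'(3) b'(3) by (meson rtrancl_trans)
qed

lemma inV:
  assumes "simple_digraph V E" "(z, a) \<in> (reduced_edges E F1 F2)\<^sup>*" "a \<in> V"
  shows "z \<in> V"
  using assms(2)
proof (cases rule: converse_rtranclE)
  case (step y)
  then show ?thesis using assms(1) unfolding simple_digraph_def reduced_edges_def by auto
qed (use assms in simp)

lemma source_nonempty:
  assumes s: "simple_digraph V E" and t: "three_reach V E f"
    and Fv: "Fv \<subset> V" and X: "X \<subseteq> V - Fv"
    and c: "card Fv \<le> f" "card X \<le> f"
  shows "\<exists>a. a \<in> source_component V E Fv X"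
proof -
  let ?R = "(reduced_edges E Fv X)\<^sup>*"
  define anc where "anc a = {z \<in> V. (z, a) \<in> ?R}" for a
  have fin: "finite V" using s unfolding simple_digraph_def by auto
  obtain a0 where "a0 \<in> V" using Fv by blast
  then obtain a where a: "a \<in> V" and amin: "\<forall>y. y \<in> V \<longrightarrow> card (anc a) \<le> card (anc y)"
    using ex_has_least_nat[of "\<lambda>x. x \<in> V" a0 "\<lambda>x. card (anc x)"] by blast
  have "(a, x) \<in> ?R" if xV: "x \<in> V" for x
  proof -
    obtain z where z: "(z, a) \<in> ?R" "(z, x) \<in> ?R"
      using common[OF s t Fv X X c c(2) a xV] by blast
    have zV: "z \<in> V" using inV[OF s z(1) a] .
    have sub: "anc z \<subseteq> anc a" using z(1) unfolding anc_def by (auto intro: rtrancl_trans)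
    have "anc z = anc a"
      using card_subset_eq[OF _ sub] amin zV fin unfolding anc_def
      by (metis (no_types, lifting) anc_def card_seteq finite_subset mem_Collect_eq subsetI sub)
    hence "a \<in> anc z" using a unfolding anc_def by auto
    hence "(a, z) \<in> ?R" unfolding anc_def by auto
    then show ?thesis using z(2) by (meson rtrancl_trans)
  qed
  then show ?thesis using a unfolding source_component_def by blast
qed

theorem theorem4p14:
  fixes V :: "'a set" and E :: "('a \<times> 'a) set" and f :: nat
    and Fv Fu Fw :: "'a set"
  assumes "simple_digraph V E"
    and "three_reach V E f"
    and "Fv \<subset> V" and "Fu \<subseteq> V - Fv" and "Fw \<subseteq> V - Fv"
    and "card Fv \<le> f" and "card Fu \<le> f" and "card Fw \<le> f"
  shows "source_component V E Fv Fu \<inter> source_component V E Fv Fw \<noteq> {}"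
proof -
  obtain a where a: "a \<in> source_component V E Fv Fu"
    using source_nonempty[OF assms(1,2,3,4,6,7)] by blast
  obtain b where b: "b \<in> source_component V E Fv Fw"
    using source_nonempty[OF assms(1,2,3,5,6,8)] by blast
  have aV: "a \<in> V" and bV: "b \<in> V" using a b unfolding source_component_def by auto
  obtain z where z: "(z, a) \<in> (reduced_edges E Fv Fu)\<^sup>*" "(z, b) \<in> (reduced_edges E Fv Fw)\<^sup>*"
    using common[OF assms(1,2,3,4,5,6,7,8) aV bV] by blast
  have zV: "z \<in> V" using inV[OF assms(1) z(1) aV] .
  have "z \<in> source_component V E Fv Fu"
    using a z(1) zV unfolding source_component_def by (auto intro: rtrancl_trans)
  moreover have "z \<in> source_component V E Fv Fw"
    using b z(2) zV unfolding source_component_def by (auto intro: rtrancl_trans)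
  ultimately show ?thesis by blast
qed

end
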